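(* Let $k\ge-1$ and let $w_0:\mathbb{R}\to\mathbb{R}$ be the odd function with $w_0(x)=x$ for $x\in[0,1)$ and $w_0(x)=x^{k+1}$ for $x\ge1$. Let $p(t,y)=\frac{1}{\sqrt{4\pi t}}\int_{\mathbb{R}}e^{-\frac{(y-z)^2}{4t}}w_0(z)\,dz$ for $t>0$ (and $p(0,\cdot)=w_0$) be the solution of $p_t=p_{yy}$ on $(0,+\infty)\times\mathbb{R}$ with $p(0,\cdot)=w_0$. Then for every $t_0>0$ there exist constants $0<C_1<C_2$ such that $C_1y^{k+1}\le p(t,y)\le C_2y^{k+1}$ for all $t\in[0,t_0]$ and all $y\ge\max(\sqrt t,1)$. *)

theory Defs
  imports "HOL-Analysis.Analysis"
begin

definition w0_pos :: "real \<Rightarrow> real \<Rightarrow> real" where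
  "w0_pos k x = (if x < 1 then x else x powr (k + 1))"

definition w0 :: "real \<Rightarrow> real \<Rightarrow> real" where
  "w0 k x = (if x \<ge> 0 then w0_pos k x else - w0_pos k (- x))"

definition heat_p :: "real \<Rightarrow> real \<Rightarrow> real \<Rightarrow> real" where
  "heat_p k t y = (if t = 0 then w0 k y else
     (1 / sqrt (4 * pi * t)) *
       (\<integral>z. exp (- ((y - z)^2) / (4 * t)) * w0 k z \<partial>lborel))"

end

theory Submission imports Defs "HOL-Probability.Probability" begin

lemma w0_pos_nonneg: "0 \<le> x \<Longrightarrow> 0 \<le> w0_pos k x" by (simp add: w0_pos_def)

lemma w0_odd: "w0 k (-x) = - w0 k x"
  unfolding w0_def by (auto simp: w0_pos_def)

lemma w0_pos_mono:
  assumes "k \<ge> -1" "0 \<le> u" "u \<le> v" shows "w0_pos k u \<le> w0_pos k v"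
proof (cases "v < 1")
  case True then show ?thesis using assms by (simp add: w0_pos_def)
next
  case False
  then have "1 \<le> v powr (k+1)" using assms by (intro ge_one_powr_ge_zero) auto
  moreover have "u \<ge> 1 \<Longrightarrow> u powr (k+1) \<le> v powr (k+1)" using assms by (intro powr_mono2) auto
  ultimately show ?thesis using False assms by (auto simp: w0_pos_def)
qed

lemma w0_mono:
  assumes "k \<ge> -1" "x \<le> y" shows "w0 k x \<le> w0 k y"
proof -
  consider "0 \<le> x" | "x < 0" "0 \<le> y" | "y < 0" using assms by linarith
  then show ?thesis
  proof cases
    case 1 then show ?thesis using assms w0_pos_mono[of k x y] by (simp add: w0_def)
  next
    case 2 then show ?thesis using w0_pos_nonneg[of "-x" k] w0_pos_nonneg[of y k] by (simp add: w0_def)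
  next
    case 3 then show ?thesis using assms w0_pos_mono[of k "-y" "-x"] by (simp add: w0_def)
  qed
qed

lemma w0_ge1: "1 \<le> y \<Longrightarrow> w0 k y = y powr (k+1)"
  by (simp add: w0_def w0_pos_def)

lemma w0_bound:
  assumes "k \<ge> -1" shows "\<bar>w0 k x\<bar> \<le> max 1 \<bar>x\<bar> powr (k+1)"
proof (cases "\<bar>x\<bar> < 1")
  case True
  then have "\<bar>w0 k x\<bar> = \<bar>x\<bar>" by (auto simp: w0_def w0_pos_def)
  then show ?thesis using True by simp
next
  case False
  then have "\<bar>w0 k x\<bar> = \<bar>x\<bar> powr (k+1)" by (auto simp: w0_def w0_pos_def)
  then show ?thesis using False by simp
qed

lemma w0_meas[measurable]: "w0 k \<in> borel_measurable borel"
  unfolding w0_def[abs_def] w0_pos_def by measurable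

lemma core:
  fixes k t t0 y :: real
  assumes k: "k \<ge> -1" and t: "0 < t" "t \<le> t0" and y: "y \<ge> max (sqrt t) 1"
  shows "exp (-1/4) / (2 * sqrt pi) * y powr (k+1) \<le> heat_p k t y"
    and "heat_p k t y \<le> 2 powr (k+1) * (1 + fact (2 * nat \<lceil>k+1\<rceil>) * t0 ^ nat \<lceil>k+1\<rceil> / fact (nat \<lceil>k+1\<rceil>)) * y powr (k+1)"
proof -
  define a where "a = k + 1"
  define m where "m = nat \<lceil>a\<rceil>"
  define \<sigma> where "\<sigma> = sqrt (2 * t)"
  define N where "N = normal_density y \<sigma>"
  have a0: "0 \<le> a" using k by (simp add: a_def)
  have am: "a \<le> real (2*m)" using a0 unfolding m_def by linarith
  have y1: "1 \<le> y" and yt: "sqrt t \<le> y" using y by auto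
  have \<sigma>0: "0 < \<sigma>" using t by (simp add: \<sigma>_def)
  have \<sigma>2: "\<sigma>^2 = 2 * t" using t by (simp add: \<sigma>_def)
  have Nform: "N z = 1 / sqrt (4 * pi * t) * exp (- ((y - z)^2) / (4 * t))" for z
    unfolding N_def normal_density_def \<sigma>2 by (simp add: power2_commute)
  have hp: "heat_p k t y = (\<integral>z. N z * w0 k z \<partial>lborel)"
    using t unfolding heat_p_def Nform by (simp add: mult.assoc)
  have Bbound: "\<bar>w0 k z\<bar> \<le> (2*y) powr a * (1 + (z-y)^(2*m))" for z
  proof -
    define M where "M = max 1 \<bar>z - y\<bar>"
    have M1: "1 \<le> M" by (simp add: M_def)
    have yM: "y \<le> y * M" using mult_left_mono[OF M1, of y] y1 by simp
    have zM: "\<bar>z - y\<bar> \<le> M" by (simp add: M_def)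
    have MyM: "M \<le> y * M" using mult_right_mono[of 1 y M] y1 M1 by simp
    have "\<bar>z\<bar> \<le> y + \<bar>z - y\<bar>" using y1 by linarith
    then have "max 1 \<bar>z\<bar> \<le> 2 * (y * M)" using yM zM MyM y1 by linarith
    then have "max 1 \<bar>z\<bar> powr a \<le> (2 * (y * M)) powr a" using a0 by (intro powr_mono2) auto
    also have "(2 * (y * M)) powr a = (2*y) powr a * M powr a" using y1 M1 
      by (metis mult.assoc mult_nonneg_nonneg order_trans powr_mult zero_le_numeral zero_le_one)
    finally have 1: "max 1 \<bar>z\<bar> powr a \<le> (2*y) powr a * M powr a" .
    have "M powr a \<le> M powr real (2*m)" using M1 am by (intro powr_mono) auto
    also have "M powr real (2*m) = M ^ (2*m)" using M1 by (subst powr_realpow) auto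
    also have "M ^ (2*m) \<le> 1 + (z-y)^(2*m)"
    proof (cases "\<bar>z - y\<bar> \<le> 1")
      case True then show ?thesis by (simp add: M_def)
    next
      case False then show ?thesis by (simp add: M_def power_even_abs)
    qed
    finally have 2: "M powr a \<le> 1 + (z-y)^(2*m)" .
    have 3: "(2*y) powr a * M powr a \<le> (2*y) powr a * (1 + (z-y)^(2*m))"
      using 2 by (intro mult_left_mono) auto
    show ?thesis using w0_bound[OF k, of z] 1 3 unfolding a_def by linarith
  qed
  have intB: "integrable lborel (\<lambda>z. (2*y) powr a * (N z + N z * (z-y)^(2*m)))"
    unfolding N_def using \<sigma>0 by (intro integrable_mult_right Bochner_Integration.integrable_add integrable_normal_moment integrable_normal_density)
  have intNw: "integrable lborel (\<lambda>z. N z * w0 k z)"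
  proof (rule Bochner_Integration.integrable_bound[OF intB])
    show "(\<lambda>z. N z * w0 k z) \<in> borel_measurable lborel" unfolding N_def by measurable
    show "AE z in lborel. norm (N z * w0 k z) \<le> norm ((2*y) powr a * (N z + N z * (z-y)^(2*m)))"
    proof (intro AE_I2)
      fix z
      have N0: "0 \<le> N z" by (simp add: N_def)
      have "norm (N z * w0 k z) = N z * \<bar>w0 k z\<bar>" using N0 by (simp add: abs_mult)
      also have "\<dots> \<le> N z * ((2*y) powr a * (1 + (z-y)^(2*m)))" using N0 Bbound[of z] by (intro mult_left_mono) auto
      also have "\<dots> = (2*y) powr a * (N z + N z * (z-y)^(2*m))" by (simp add: algebra_simps)
      also have "\<dots> \<le> norm \<dots>" by simp
      finally show "norm (N z * w0 k z) \<le> norm ((2*y) powr a * (N z + N z * (z-y)^(2*m)))" .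
    qed
  qed
  show "heat_p k t y \<le> 2 powr (k+1) * (1 + fact (2 * nat \<lceil>k+1\<rceil>) * t0 ^ nat \<lceil>k+1\<rceil> / fact (nat \<lceil>k+1\<rceil>)) * y powr (k+1)"
  proof -
    have "heat_p k t y \<le> (\<integral>z. (2*y) powr a * (N z + N z * (z-y)^(2*m)) \<partial>lborel)"
      unfolding hp
    proof (rule integral_mono[OF intNw intB])
      fix z
      have N0: "0 \<le> N z" by (simp add: N_def)
      have "N z * w0 k z \<le> N z * ((2*y) powr a * (1 + (z-y)^(2*m)))"
        using N0 Bbound[of z] by (intro mult_left_mono) auto
      then show "N z * w0 k z \<le> (2*y) powr a * (N z + N z * (z-y)^(2*m))" by (simp add: algebra_simps)
    qed
    also have "\<dots> = (2*y) powr a * (1 + fact (2 * m) / ((2 / \<sigma>\<^sup>2)^m * fact m))"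
      unfolding N_def using \<sigma>0
      by (simp add: integral_normal_moment_even Bochner_Integration.integral_add integrable_normal_moment)
    also have "fact (2 * m) / ((2 / \<sigma>\<^sup>2)^m * fact m) = fact (2*m) * t ^ m / fact m"
      using t unfolding \<sigma>2 by (simp add: power_divide field_simps)
    also have "fact (2*m) * t ^ m / fact m \<le> fact (2*m) * t0 ^ m / (fact m :: real)"
      using t by (intro divide_right_mono mult_left_mono power_mono) auto
    also have "(2*y) powr a = 2 powr a * y powr a" using y1 by (simp add: powr_mult)
    finally show ?thesis unfolding a_def m_def using y1
      by (simp add: mult_ac)
  qed
  have Nsym: "N (2*y - x) = N x" for x
    unfolding N_def normal_density_def by (simp add: power2_commute)
  have refl: "(\<integral>z. N z * w0 k z \<partial>lborel) = (\<integral>x. N x * w0 k (2*y - x) \<partial>lborel)"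
    using lborel_integral_real_affine[of "-1" "\<lambda>z. N z * w0 k z" "2*y"] by (simp add: Nsym)
  have intNw2: "integrable lborel (\<lambda>x. N x * w0 k (2*y - x))"
    using lborel_integrable_real_affine[OF intNw, of "-1" "2*y"] by (simp add: Nsym)
  have sum2: "2 * heat_p k t y = (\<integral>x. N x * (w0 k x + w0 k (2*y - x)) \<partial>lborel)"
    unfolding hp using refl intNw intNw2 by (simp add: distrib_left Bochner_Integration.integral_add)
  define S where "S = {y - sqrt t .. y + sqrt t}"
  define c where "c = exp (-1/4) / sqrt (4 * pi * t) * y powr a"
  have st: "0 < sqrt t" using t by simp
  have lowpt: "indicator S x * c \<le> N x * (w0 k x + w0 k (2*y - x))" for x
  proof (cases "x \<in> S")
    case False
    have "w0 k (x - 2*y) \<le> w0 k x" using k y1 by (intro w0_mono) auto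
    then have "0 \<le> w0 k x + w0 k (2*y - x)" using w0_odd[of k "2*y - x"] by simp
    then show ?thesis using False by (simp add: N_def)
  next
    case True
    then have d: "(x - y)^2 \<le> t"
      unfolding S_def using t by (smt (verit) abs_le_square_iff atLeastAtMost_iff real_sqrt_abs real_sqrt_le_iff real_sqrt_pow2 real_sqrt_power)
    have "exp (-1/4) \<le> exp (- ((y - x)^2) / (4 * t))"
      using d t by (simp add: power2_commute divide_simps)
    then have Nlow: "exp (-1/4) / sqrt (4 * pi * t) \<le> N x"
      unfolding Nform by (metis divide_right_mono real_sqrt_ge_zero times_divide_eq_left mult_1 divide_nonneg_nonneg less_eq_real_def pi_gt_zero t(1) mult_pos_pos zero_less_numeral)
    have wl: "y powr a \<le> w0 k x + w0 k (2*y - x)"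
    proof (cases "y \<le> x")
      case True
      have "w0 k y \<le> w0 k x" using True k by (intro w0_mono)
      moreover have "w0 k 0 \<le> w0 k (2*y - x)" using \<open>x \<in> S\<close> yt k unfolding S_def by (intro w0_mono) auto
      ultimately show ?thesis using w0_ge1[OF y1, of k] unfolding a_def by (simp add: w0_def w0_pos_def)
    next
      case False
      have "w0 k y \<le> w0 k (2*y - x)" using False k by (intro w0_mono) auto
      moreover have "w0 k 0 \<le> w0 k x" using \<open>x \<in> S\<close> yt k unfolding S_def by (intro w0_mono) auto
      ultimately show ?thesis using w0_ge1[OF y1, of k] unfolding a_def by (simp add: w0_def w0_pos_def)
    qed
    have "c \<le> N x * (w0 k x + w0 k (2*y - x))"
      unfolding c_def using Nlow wl by (intro mult_mono) (auto simp: N_def)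
    then show ?thesis using True by simp
  qed
  have nn: "0 \<le> N x * (w0 k x + w0 k (2*y - x))" for x
  proof -
    have "w0 k (x - 2*y) \<le> w0 k x" using k y1 by (intro w0_mono) auto
    then have "0 \<le> w0 k x + w0 k (2*y - x)" using w0_odd[of k "2*y - x"] by simp
    then show ?thesis by (simp add: N_def)
  qed
  have intS: "integrable lborel (\<lambda>x. N x * (w0 k x + w0 k (2*y - x)))"
    using intNw intNw2 by (simp add: distrib_left)
  have A: "(\<integral>x. indicator S x * c \<partial>lborel) \<le> (\<integral>x. N x * (w0 k x + w0 k (2*y - x)) \<partial>lborel)"
    by (rule integral_mono'[OF intS]) (use lowpt nn in auto)
  have B: "(\<integral>x. indicator S x * c \<partial>lborel) = 2 * sqrt t * c"
    unfolding S_def using st by simp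
  have "2 * sqrt t * c \<le> 2 * heat_p k t y" using A B sum2 by linarith
  moreover have "sqrt t * c = exp (-1/4) / (2 * sqrt pi) * y powr a"
    unfolding c_def using t by (simp add: real_sqrt_mult field_simps)
  ultimately show "exp (-1/4) / (2 * sqrt pi) * y powr (k+1) \<le> heat_p k t y"
    unfolding a_def by simp
qed

theorem lemma2p2:
  fixes k t0 :: real
  assumes "k \<ge> -1" and "t0 > 0"
  shows "\<exists>C1 C2. 0 < C1 \<and> C1 < C2 \<and>
    (\<forall>t y. 0 \<le> t \<and> t \<le> t0 \<and> y \<ge> max (sqrt t) 1 \<longrightarrow>
       C1 * y powr (k + 1) \<le> heat_p k t y \<and> heat_p k t y \<le> C2 * y powr (k + 1))"
proof -
  define C1 where "C1 = exp (-1/4) / (2 * sqrt pi)"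
  define C2 where "C2 = 2 powr (k+1) * (1 + fact (2 * nat \<lceil>k+1\<rceil>) * t0 ^ nat \<lceil>k+1\<rceil> / fact (nat \<lceil>k+1\<rceil>))"
  have C1pos: "0 < C1" by (simp add: C1_def)
  have pi1: "1 \<le> sqrt pi" using pi_gt3 by simp
  have C1lt: "C1 < 1"
  proof -
    have "exp (-1/4::real) < 1" by simp
    then have "exp (-1/4::real) < 2 * sqrt pi" using pi1 by linarith
    then show ?thesis unfolding C1_def using pi1 by (simp add: divide_less_eq)
  qed
  have C2ge: "1 \<le> C2"
  proof -
    have "1 \<le> (2::real) powr (k+1)" using assms(1) by (intro ge_one_powr_ge_zero) auto
    moreover have "1 \<le> 1 + fact (2 * nat \<lceil>k+1\<rceil>) * t0 ^ nat \<lceil>k+1\<rceil> / (fact (nat \<lceil>k+1\<rceil>) :: real)"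
      using assms(2) by simp
    ultimately show ?thesis unfolding C2_def
      by (metis mult_mono' mult_1 zero_le_one)
  qed
  show ?thesis
  proof (rule exI[of _ C1], rule exI[of _ C2], intro conjI)
    show "0 < C1" by fact
    show "C1 < C2" using C1lt C2ge by linarith
  next
    show "\<forall>t y. 0 \<le> t \<and> t \<le> t0 \<and> y \<ge> max (sqrt t) 1 \<longrightarrow>
       C1 * y powr (k + 1) \<le> heat_p k t y \<and> heat_p k t y \<le> C2 * y powr (k + 1)"
  proof (intro allI impI)
    fix t y assume h: "0 \<le> t \<and> t \<le> t0 \<and> max (sqrt t) 1 \<le> y"
    show "C1 * y powr (k + 1) \<le> heat_p k t y \<and> heat_p k t y \<le> C2 * y powr (k + 1)"
    proof (cases "t = 0")
      case True
      then have hp: "heat_p k t y = y powr (k+1)" using h by (simp add: heat_p_def w0_ge1)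
      have Y: "0 \<le> y powr (k+1)" by simp
      have "C1 * y powr (k+1) \<le> 1 * y powr (k+1)" using C1lt Y by (intro mult_right_mono) auto
      moreover have "1 * y powr (k+1) \<le> C2 * y powr (k+1)" using C2ge Y by (intro mult_right_mono) auto
      ultimately show ?thesis unfolding hp by simp
    next
      case False
      then have "0 < t" using h by simp
      then show ?thesis using core[OF assms(1) \<open>0 < t\<close>, of t0 y] h unfolding C1_def C2_def by auto
    qed
  qed
  qed
qed

end
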